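(* Let $(\gamma_n)_{n\ge 0}$ be a sequence of positive reals satisfying conditions (C1)–(C7) below, and let $(p_n)$ be the associated symmetric orthonormal polynomials. Then for every $\omega\in\mathbb{R}$ the limits below exist and satisfy \[ \lim_{n\to\infty}\frac{\sum_{k=0}^n p_k^2(\omega)}{\sum_{k=0}^n \frac{1}{\gamma_k}}=\frac12\lim_{n\to\infty}\gamma_n\bigl(p_n^2(\omega)+p_{n+1}^2(\omega)\bigr), \] and the convergence of both limits is uniform on every compact subset of $\mathbb{R}$.
   Context: Given positive reals $\gamma_n>0$ ($n\ge 0$), set $\gamma_{-1}=1$, $p_{-1}(\omega)=0$, $p_0(\omega)=1$, and define polynomials by $\gamma_n p_{n+1}(\omega)=\omega p_n(\omega)-\gamma_{n-1}p_{n-1}(\omega)$ for $n\ge0$. Let $\Delta_n=\gamma_{n+1}-\gamma_n$ and $\Delta^2_n=\Delta_{n+1}-\Delta_n$. The conditions are: (C1) $\gamma_n\to\infty$; (C2) $\Delta_n\to 0$; (C3) there exist $n_0,m_0$ such that $\gamma_{n+m}>\gamma_n$ for all $n\ge n_0$, $m\ge m_0$; (C4) $\sum_{j\ge0}1/\gamma_j=\infty$; (C5) there exists $\kappa>1$ with $\sum_{j\ge0}\gamma_j^{-\kappa}<\infty$; (C6) $\sum_{n\ge0}|\Delta_n|/\gamma_n^2<\infty$; (C7) $\sum_{n\ge0}|\Delta^2_n|/\gamma_n<\infty$. *)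

theory Defs
  imports "HOL-Analysis.Analysis"
begin

text \<open>Orthonormal polynomials p_n(w) attached to gamma via
  gamma_n p_{n+1} = w p_n - gamma_{n-1} p_{n-1}, with p_{-1} = 0, p_0 = 1, gamma_{-1} = 1.
  Hence p_1 = w / gamma_0 and p_{n+2} = (w p_{n+1} - gamma_n p_n) / gamma_{n+1}.\<close>
fun opoly :: "(nat \<Rightarrow> real) \<Rightarrow> nat \<Rightarrow> real \<Rightarrow> real" where
  "opoly g 0 w = 1"
| "opoly g (Suc 0) w = w / g 0"
| "opoly g (Suc (Suc n)) w = (w * opoly g (Suc n) w - g n * opoly g n w) / g (Suc n)"

end

theory Submission
  imports Defs
begin


definition FF :: "(nat \<Rightarrow> real) \<Rightarrow> nat \<Rightarrow> real \<Rightarrow> real" where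
  "FF g n w = g n * ((opoly g n w)\<^sup>2 + (opoly g (Suc n) w)\<^sup>2) - w * opoly g n w * opoly g (Suc n) w"

lemma opoly_rec:
  assumes "g (Suc n) > 0"
  shows "g (Suc n) * opoly g (Suc (Suc n)) w = w * opoly g (Suc n) w - g n * opoly g n w"
  using assms by simp

lemma FF_step_alg:
  fixes a b x y z w :: real
  assumes hz: "b*z = w*y - a*x"
  shows "b*(b*(y\<^sup>2+z\<^sup>2) - w*y*z) = a*(a*(x\<^sup>2+y\<^sup>2) - w*x*y) + (b\<^sup>2-a\<^sup>2)*y\<^sup>2"
proof -
  have "b*(b*(y\<^sup>2+z\<^sup>2) - w*y*z) = b\<^sup>2*y\<^sup>2 + (b*z)\<^sup>2 - w*y*(b*z)" by algebra
  also have "\<dots> = b\<^sup>2*y\<^sup>2 + (w*y - a*x)\<^sup>2 - w*y*(w*y - a*x)" by (simp add: hz)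
  also have "\<dots> = a*(a*(x\<^sup>2+y\<^sup>2) - w*x*y) + (b\<^sup>2-a\<^sup>2)*y\<^sup>2" by algebra
  finally show ?thesis .
qed

lemma FF_step:
  assumes "g (Suc n) > 0"
  shows "g (Suc n) * FF g (Suc n) w = g n * FF g n w + ((g (Suc n))\<^sup>2 - (g n)\<^sup>2) * (opoly g (Suc n) w)\<^sup>2"
  unfolding FF_def using FF_step_alg[OF opoly_rec[of g n w, OF assms]] by simp

lemma two_step_id:
  fixes a b c x y z w :: real
  assumes hz: "b*z = w*y - a*x" and b: "b > 0"
  shows "(a - c)*(a*(x\<^sup>2+y\<^sup>2) - w*x*y) + (b\<^sup>2-a\<^sup>2)*y\<^sup>2 + (c\<^sup>2-b\<^sup>2)*z\<^sup>2 =
     (a*((c-b)-(b-a)) + a*(c-b)*(-2*b*(b-a) + b*(c-b) - (b-a)*(c-b))/b\<^sup>2)*x\<^sup>2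
   + (a*((b-a)-(c-b)) + (b-a)\<^sup>2 + (c-b)*(b+c)*w\<^sup>2/b\<^sup>2)*y\<^sup>2
   + (((b-a)+(c-b)) - 2*(c-b)*(b+c)*a/b\<^sup>2)*w*x*y"
proof -
  have z: "z = (w*y - a*x)/b" using hz b by (simp add: field_simps)
  show ?thesis unfolding z using b by (simp add: field_simps power2_eq_square)
qed

lemma two_step_bound:
  fixes a b c x y z w R F0 F2 :: real
  assumes a: "a \<ge> 2" and b: "b \<ge> 2" and c: "c \<ge> 2" and d1: "\<bar>b-a\<bar> \<le> 1" and d2: "\<bar>c-b\<bar> \<le> 1"
    and wR: "\<bar>w\<bar> \<le> R" and Ra: "R \<le> a"
    and hz: "b*z = w*y - a*x"
    and hF2: "c*F2 = a*F0 + (b\<^sup>2-a\<^sup>2)*y\<^sup>2 + (c\<^sup>2-b\<^sup>2)*z\<^sup>2"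
    and hF0: "F0 = a*(x\<^sup>2+y\<^sup>2) - w*x*y"
  shows "\<bar>F2 - F0\<bar> \<le> (4*\<bar>(c-b)-(b-a)\<bar>/c + (8+12*R+3*R\<^sup>2)*\<bar>c-b\<bar>/(b*c)
            + (2+2*R)*\<bar>b-a\<bar>/(a*c) + 2*R*\<bar>c-b\<bar>/(a*c)) * F0"
proof -
  define d1 where "d1 = b - a"
  define d2 where "d2 = c - b"
  define A where "A = a*((c-b)-(b-a)) + a*(c-b)*(-2*b*(b-a) + b*(c-b) - (b-a)*(c-b))/b\<^sup>2"
  define B where "B = a*((b-a)-(c-b)) + (b-a)\<^sup>2 + (c-b)*(b+c)*w\<^sup>2/b\<^sup>2"
  define C where "C = ((b-a)+(c-b)) - 2*(c-b)*(b+c)*a/b\<^sup>2"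
  have R0: "R \<ge> 0" using wR by linarith
  have N: "c*(F2 - F0) = A*x\<^sup>2 + B*y\<^sup>2 + C*w*x*y"
  proof -
    have "c*(F2 - F0) = (a - c)*F0 + (b\<^sup>2-a\<^sup>2)*y\<^sup>2 + (c\<^sup>2-b\<^sup>2)*z\<^sup>2"
      using hF2 by (simp add: algebra_simps)
    also have "\<dots> = (a - c)*(a*(x\<^sup>2+y\<^sup>2) - w*x*y) + (b\<^sup>2-a\<^sup>2)*y\<^sup>2 + (c\<^sup>2-b\<^sup>2)*z\<^sup>2"
      by (simp add: hF0)
    also have "\<dots> = A*x\<^sup>2 + B*y\<^sup>2 + C*w*x*y"
      unfolding A_def B_def C_def by (rule two_step_id[OF hz]) (use b in auto)
    finally show ?thesis .
  qed
  have d1b: "\<bar>d1\<bar> \<le> 1" and d2b: "\<bar>d2\<bar> \<le> 1" using d1 d2 by (auto simp: d1_def d2_def)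
  have b3: "b + c \<le> 3*b" using d2 b by (auto simp: abs_le_iff)
  have bc: "(b+c)/b\<^sup>2 \<le> 3/b"
  proof -
    have "(b+c)/b\<^sup>2 \<le> (3*b)/b\<^sup>2" using b3 b by (intro divide_right_mono) auto
    also have "\<dots> = 3/b" using b by (simp add: power2_eq_square)
    finally show ?thesis .
  qed
  have Ab: "\<bar>A\<bar> \<le> a*\<bar>d2-d1\<bar> + 4*a*\<bar>d2\<bar>/b"
  proof -
    have i: "\<bar>-2*b*d1 + b*d2 - d1*d2\<bar> \<le> 4*b"
    proof -
      have "\<bar>-2*b*d1 + b*d2 - d1*d2\<bar> \<le> 2*b*\<bar>d1\<bar> + b*\<bar>d2\<bar> + \<bar>d1\<bar>*\<bar>d2\<bar>"
        using b by (simp add: abs_mult abs_triangle_ineq4 order_trans[OF abs_triangle_ineq4] abs_triangle_ineq)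
      also have "\<dots> \<le> 2*b*1 + b*1 + 1*1"
        using d1b d2b b by (intro add_mono mult_mono) auto
      finally show ?thesis using b by linarith
    qed
    define T where "T = a*d2*(-2*b*d1 + b*d2 - d1*d2)/b\<^sup>2"
    have "\<bar>T\<bar> = a*\<bar>d2\<bar>*\<bar>-2*b*d1 + b*d2 - d1*d2\<bar>/b\<^sup>2"
      using a unfolding T_def by (simp add: abs_mult)
    also have "\<dots> \<le> a*\<bar>d2\<bar>*(4*b)/b\<^sup>2"
      using a b i by (intro divide_right_mono mult_left_mono) auto
    also have "\<dots> = 4*a*\<bar>d2\<bar>/b" using b by (simp add: power2_eq_square)
    finally have Tb: "\<bar>T\<bar> \<le> 4*a*\<bar>d2\<bar>/b" .
    have Aeq: "A = a*(d2-d1) + T"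
      unfolding A_def T_def d1_def d2_def by simp
    have "\<bar>A\<bar> \<le> \<bar>a*(d2-d1)\<bar> + \<bar>T\<bar>" unfolding Aeq by (rule abs_triangle_ineq)
    also have "\<bar>a*(d2-d1)\<bar> = a*\<bar>d2-d1\<bar>" using a by (simp add: abs_mult)
    finally show ?thesis using Tb by linarith
  qed
  have Bb: "\<bar>B\<bar> \<le> a*\<bar>d2-d1\<bar> + \<bar>d1\<bar> + 3*R\<^sup>2*\<bar>d2\<bar>/b"
  proof -
    have w2: "w\<^sup>2 \<le> R\<^sup>2" using wR by (metis abs_ge_zero power2_abs power_mono)
    define T where "T = d2*(b+c)*w\<^sup>2/b\<^sup>2"
    have "\<bar>T\<bar> = \<bar>d2\<bar>*w\<^sup>2*((b+c)/b\<^sup>2)" using b c unfolding T_def by (simp add: abs_mult)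
    also have "\<dots> \<le> \<bar>d2\<bar>*R\<^sup>2*(3/b)" using bc w2 b c by (intro mult_mono) auto
    finally have t: "\<bar>T\<bar> \<le> 3*R\<^sup>2*\<bar>d2\<bar>/b" by (simp add: mult.commute mult.left_commute)
    have sq: "d1\<^sup>2 \<le> \<bar>d1\<bar>"
    proof -
      have "d1\<^sup>2 = \<bar>d1\<bar>*\<bar>d1\<bar>" by (simp add: power2_eq_square)
      also have "\<dots> \<le> \<bar>d1\<bar>*1" using d1b by (intro mult_left_mono) auto
      finally show ?thesis by simp
    qed
    have Beq: "B = a*(d1-d2) + d1\<^sup>2 + T" unfolding B_def T_def d1_def d2_def by simp
    have "\<bar>B\<bar> \<le> \<bar>a*(d1-d2)\<bar> + \<bar>d1\<^sup>2\<bar> + \<bar>T\<bar>" unfolding Beq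
      using abs_triangle_ineq[of "a*(d1-d2) + d1\<^sup>2" T] abs_triangle_ineq[of "a*(d1-d2)" "d1\<^sup>2"] by linarith
    also have "\<bar>a*(d1-d2)\<bar> = a*\<bar>d2-d1\<bar>" using a by (simp add: abs_mult abs_minus_commute)
    finally show ?thesis using t sq by simp
  qed
  have Cb: "\<bar>C\<bar> \<le> \<bar>d1\<bar> + \<bar>d2\<bar> + 6*a*\<bar>d2\<bar>/b"
  proof -
    have "\<bar>2*d2*(b+c)*a/b\<^sup>2\<bar> = 2*a*\<bar>d2\<bar>*((b+c)/b\<^sup>2)" using a b c by (simp add: abs_mult)
    also have "\<dots> \<le> 2*a*\<bar>d2\<bar>*(3/b)" using bc a by (intro mult_left_mono) auto
    finally have t: "\<bar>2*d2*(b+c)*a/b\<^sup>2\<bar> \<le> 6*a*\<bar>d2\<bar>/b" by simp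
    have "C = (d1+d2) - 2*d2*(b+c)*a/b\<^sup>2" unfolding C_def d1_def d2_def by simp
    then show ?thesis using t by linarith
  qed
  define ss where "ss = x\<^sup>2 + y\<^sup>2"
  have s0: "ss \<ge> 0" unfolding ss_def by simp
  have xy: "\<bar>x*y\<bar> \<le> ss/2"
  proof -
    have "0 \<le> (\<bar>x\<bar> - \<bar>y\<bar>)\<^sup>2" by simp
    also have "(\<bar>x\<bar> - \<bar>y\<bar>)\<^sup>2 = x\<^sup>2 + y\<^sup>2 - 2*\<bar>x*y\<bar>"
      by (simp add: power2_diff abs_mult)
    finally have h: "0 \<le> x\<^sup>2 + y\<^sup>2 - 2*\<bar>x*y\<bar>" .
    define t where "t = \<bar>x*y\<bar>"
    have "0 \<le> ss - 2*t" using h unfolding t_def ss_def .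
    hence "t \<le> ss/2" by linarith
    thus ?thesis unfolding t_def .
  qed
  have wxy: "\<bar>w*x*y\<bar> \<le> R * ss/2"
  proof -
    have "\<bar>w*x*y\<bar> = \<bar>w\<bar>*\<bar>x*y\<bar>" by (simp add: abs_mult)
    also have "\<dots> \<le> R*(ss/2)" using wR xy by (intro mult_mono) auto
    finally show ?thesis by simp
  qed
  have F0ge: "a * ss/2 \<le> F0"
  proof -
    have "R * ss \<le> a * ss" using Ra s0 by (rule mult_right_mono)
    moreover have "F0 = a * ss - w*x*y" unfolding hF0 ss_def by simp
    moreover have "w*x*y \<le> \<bar>w*x*y\<bar>" by simp
    ultimately show ?thesis using wxy by linarith
  qed
  have Nb: "\<bar>A*x\<^sup>2 + B*y\<^sup>2 + C*w*x*y\<bar> \<le> (\<bar>A\<bar>+\<bar>B\<bar>+R*\<bar>C\<bar>) * ss"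
  proof -
    have e1: "\<bar>A*x\<^sup>2\<bar> = \<bar>A\<bar>*x\<^sup>2" by (simp add: abs_mult)
    have e2: "\<bar>B*y\<^sup>2\<bar> = \<bar>B\<bar>*y\<^sup>2" by (simp add: abs_mult)
    have e3: "\<bar>C*w*x*y\<bar> = \<bar>C\<bar>*\<bar>w*x*y\<bar>" by (simp add: abs_mult)
    have "\<bar>A*x\<^sup>2 + B*y\<^sup>2 + C*w*x*y\<bar> \<le> \<bar>A*x\<^sup>2\<bar> + \<bar>B*y\<^sup>2\<bar> + \<bar>C*w*x*y\<bar>"
      using abs_triangle_ineq[of "A*x\<^sup>2 + B*y\<^sup>2" "C*w*x*y"] abs_triangle_ineq[of "A*x\<^sup>2" "B*y\<^sup>2"] by linarith
    also have "\<dots> = \<bar>A\<bar>*x\<^sup>2 + \<bar>B\<bar>*y\<^sup>2 + \<bar>C\<bar>*\<bar>w*x*y\<bar>" using e1 e2 e3 by simp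
    also have "\<dots> \<le> \<bar>A\<bar> * ss + \<bar>B\<bar> * ss + \<bar>C\<bar>*(R * ss/2)"
      using wxy unfolding ss_def
      by (intro add_mono mult_left_mono) auto
    also have "\<dots> \<le> \<bar>A\<bar> * ss + \<bar>B\<bar> * ss + \<bar>C\<bar>*(R * ss)"
      using R0 s0 by (intro add_mono mult_left_mono) auto
    also have "\<dots> = (\<bar>A\<bar>+\<bar>B\<bar>+R*\<bar>C\<bar>) * ss" by (simp add: algebra_simps)
    finally show ?thesis .
  qed
  define K where "K = \<bar>A\<bar>+\<bar>B\<bar>+R*\<bar>C\<bar>"
  have K0: "K \<ge> 0" unfolding K_def using R0 by simp
  have "c*\<bar>F2 - F0\<bar> = \<bar>c*(F2 - F0)\<bar>" using c by (simp add: abs_mult)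
  also have "\<dots> = \<bar>A*x\<^sup>2 + B*y\<^sup>2 + C*w*x*y\<bar>" by (simp only: N)
  also have "\<dots> \<le> K * ss" using Nb unfolding K_def .
  also have "\<dots> \<le> K*(2*F0/a)"
  proof -
    have "ss \<le> 2*F0/a" using F0ge a by (simp add: field_simps)
    then show ?thesis using K0 by (rule mult_left_mono)
  qed
  finally have cF: "c*\<bar>F2 - F0\<bar> \<le> K*(2*F0/a)" .
  have main: "\<bar>F2 - F0\<bar> \<le> (2*K/(a*c))*F0"
  proof -
    have "\<bar>F2 - F0\<bar> \<le> K*(2*F0/a)/c" using cF c by (subst pos_le_divide_eq) (auto simp: mult.commute)
    also have "K*(2*F0/a)/c = (2*K/(a*c))*F0" using a c by (simp add: field_simps)
    finally show ?thesis .
  qed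
  define X where "X = \<bar>d2-d1\<bar>"
  define Y where "Y = \<bar>d2\<bar>"
  define Z where "Z = \<bar>d1\<bar>"
  have Y0: "Y \<ge> 0" unfolding Y_def by simp
  have Kb: "2*K/(a*c) \<le> 4*X/c + (8+12*R+3*R\<^sup>2)*Y/(b*c) + (2+2*R)*Z/(a*c) + 2*R*Y/(a*c)"
  proof -
    have "K \<le> (a*X + 4*a*Y/b) + (a*X + Z + 3*R\<^sup>2*Y/b) + R*(Z + Y + 6*a*Y/b)"
      using Ab Bb mult_left_mono[OF Cb R0] unfolding K_def X_def Y_def Z_def by linarith
    hence k0: "2*K/(a*c) \<le> 2*((a*X + 4*a*Y/b) + (a*X + Z + 3*R\<^sup>2*Y/b) + R*(Z + Y + 6*a*Y/b))/(a*c)"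
      using a c by (intro divide_right_mono) auto
    have e1: "2*((a*X + 4*a*Y/b) + (a*X + Z + 3*R\<^sup>2*Y/b) + R*(Z + Y + 6*a*Y/b))/(a*c)
       = 4*X/c + (8+12*R)*Y/(b*c) + 6*R\<^sup>2*Y/(a*b*c) + (2+2*R)*Z/(a*c) + 2*R*Y/(a*c)"
      using a b c by (simp add: field_simps power2_eq_square)
    have e2a: "6*R\<^sup>2*Y/(a*b*c) = (3*R\<^sup>2*Y/(b*c))*(2/a)" using a b c by (simp add: field_simps)
    have e2b: "(3*R\<^sup>2*Y/(b*c))*(2/a) \<le> 3*R\<^sup>2*Y/(b*c)"
    proof -
      have "2/a \<le> 1" using a by simp
      moreover have "3*R\<^sup>2*Y/(b*c) \<ge> 0" using Y0 b c by simp
      ultimately show ?thesis by (metis mult_left_mono mult.right_neutral)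
    qed
    have e3: "(8+12*R)*Y/(b*c) + 3*R\<^sup>2*Y/(b*c) = (8+12*R+3*R\<^sup>2)*Y/(b*c)"
      by (simp add: add_divide_distrib distrib_right)
    show ?thesis using k0 e1 e2a e2b e3 by linarith
  qed
  have F0nn: "F0 \<ge> 0"
  proof -
    have "0 \<le> a * ss/2" using a s0 by simp
    then show ?thesis using F0ge by linarith
  qed
  have "\<bar>F2 - F0\<bar> \<le> (4*X/c + (8+12*R+3*R\<^sup>2)*Y/(b*c) + (2+2*R)*Z/(a*c) + 2*R*Y/(a*c)) * F0"
    using main mult_right_mono[OF Kb F0nn] by linarith
  then show ?thesis unfolding X_def Y_def Z_def d1_def d2_def .
qed




context
  fixes g :: "nat \<Rightarrow> real"
  assumes pos: "\<And>n. g n > 0"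
    and C1: "filterlim g at_top sequentially"
    and C2: "(\<lambda>n. g (Suc n) - g n) \<longlonglongrightarrow> 0"
    and C4: "\<not> summable (\<lambda>j. 1 / g j)"
    and C6: "summable (\<lambda>n. \<bar>g (Suc n) - g n\<bar> / (g n)\<^sup>2)"
    and C7: "summable (\<lambda>n. \<bar>(g (Suc (Suc n)) - g (Suc n)) - (g (Suc n) - g n)\<bar> / g n)"
begin

lemma FF_two:
  "g (Suc (Suc n)) * FF g (Suc (Suc n)) w = g n * FF g n w
     + ((g (Suc n))\<^sup>2 - (g n)\<^sup>2) * (opoly g (Suc n) w)\<^sup>2
     + ((g (Suc (Suc n)))\<^sup>2 - (g (Suc n))\<^sup>2) * (opoly g (Suc (Suc n)) w)\<^sup>2"
  using FF_step[of g "Suc n" w, OF pos] FF_step[of g n w, OF pos] by simp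

lemma good_N:
  fixes R :: real
  shows "\<exists>N. \<forall>k\<ge>N. g k \<ge> 2 \<and> g k \<ge> R \<and> \<bar>g (Suc k) - g k\<bar> \<le> 1"
proof -
  have e1: "eventually (\<lambda>k. max 2 R \<le> g k) sequentially"
    using C1 unfolding filterlim_at_top by blast
  have e2: "eventually (\<lambda>k. \<bar>g (Suc k) - g k\<bar> < 1) sequentially"
    using C2 unfolding tendsto_iff by (auto simp: dist_real_def elim!: allE[of _ 1])
  have "eventually (\<lambda>k. g k \<ge> 2 \<and> g k \<ge> R \<and> \<bar>g (Suc k) - g k\<bar> \<le> 1) sequentially"
    using eventually_conj[OF e1 e2] by (rule eventually_mono) auto
  then show ?thesis unfolding eventually_sequentially by blast
qed

lemma ratio:
  assumes "g n \<ge> 2" "\<bar>g (Suc n) - g n\<bar> \<le> 1"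
  shows "g (Suc n) \<ge> g n / 2" "g n \<ge> g (Suc n) / 2"
  using assms by (auto simp: abs_le_iff)

definition ee :: "real \<Rightarrow> nat \<Rightarrow> real" where
  "ee R n = 4*\<bar>(g (Suc (Suc n)) - g (Suc n)) - (g (Suc n) - g n)\<bar>/g (Suc (Suc n))
     + (8+12*R+3*R\<^sup>2)*\<bar>g (Suc (Suc n)) - g (Suc n)\<bar>/(g (Suc n)*g (Suc (Suc n)))
     + (2+2*R)*\<bar>g (Suc n) - g n\<bar>/(g n*g (Suc (Suc n)))
     + 2*R*\<bar>g (Suc (Suc n)) - g (Suc n)\<bar>/(g n*g (Suc (Suc n)))"

lemma ee_nonneg: "R \<ge> 0 \<Longrightarrow> ee R n \<ge> 0"
  unfolding ee_def using pos[of n] pos[of "Suc n"] pos[of "Suc (Suc n)"]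
  by (intro add_nonneg_nonneg divide_nonneg_nonneg mult_nonneg_nonneg) auto

lemma F_lower_alg:
  fixes a w x y :: real
  assumes "\<bar>w\<bar> \<le> a"
  shows "a*(x\<^sup>2+y\<^sup>2) \<le> 2*(a*(x\<^sup>2+y\<^sup>2) - w*x*y)"
proof -
  have "0 \<le> (\<bar>x\<bar> - \<bar>y\<bar>)\<^sup>2" by simp
  also have "(\<bar>x\<bar> - \<bar>y\<bar>)\<^sup>2 = x\<^sup>2 + y\<^sup>2 - 2*\<bar>x*y\<bar>"
    by (simp add: power2_diff abs_mult)
  finally have h: "0 \<le> x\<^sup>2 + y\<^sup>2 - 2*\<bar>x*y\<bar>" .
  define t where "t = \<bar>x*y\<bar>"
  define u where "u = x\<^sup>2 + y\<^sup>2"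
  have "0 \<le> u - 2*t" using h unfolding t_def u_def .
  hence tu: "t \<le> u/2" by linarith
  have u0: "u \<ge> 0" unfolding u_def by simp
  have "\<bar>w*x*y\<bar> = \<bar>w\<bar>*t" unfolding t_def by (simp add: abs_mult)
  also have "\<dots> \<le> a*(u/2)" using assms tu by (intro mult_mono) (auto simp: t_def)
  finally have "\<bar>w*x*y\<bar> \<le> a*(u/2)" .
  moreover have "w*x*y \<le> \<bar>w*x*y\<bar>" by simp
  ultimately have "w*x*y \<le> a*u/2" by simp
  then show ?thesis unfolding u_def[symmetric] by simp
qed

lemma FF_lower:
  assumes "\<bar>w\<bar> \<le> g n"
  shows "g n * ((opoly g n w)\<^sup>2 + (opoly g (Suc n) w)\<^sup>2) \<le> 2 * FF g n w"
  unfolding FF_def by (rule F_lower_alg[OF assms])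

lemma step2:
  assumes N: "\<forall>k\<ge>N. g k \<ge> 2 \<and> g k \<ge> R \<and> \<bar>g (Suc k) - g k\<bar> \<le> 1" and n: "n \<ge> N" and w: "\<bar>w\<bar> \<le> R"
  shows "\<bar>FF g (Suc (Suc n)) w - FF g n w\<bar> \<le> ee R n * FF g n w"
proof -
  have h0: "g n \<ge> 2" "g n \<ge> R" "\<bar>g (Suc n) - g n\<bar> \<le> 1" using N n by auto
  have h1: "g (Suc n) \<ge> 2" "\<bar>g (Suc (Suc n)) - g (Suc n)\<bar> \<le> 1" using N n by auto
  have h2: "g (Suc (Suc n)) \<ge> 2" using N n by auto
  show ?thesis unfolding ee_def
    by (rule two_step_bound[OF h0(1) h1(1) h2 h0(3) h1(2) w h0(2)
          opoly_rec[of g n w, OF pos] FF_two]) (simp add: FF_def)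
qed

lemma ee_summable:
  assumes R0: "R \<ge> 0"
  shows "summable (ee R)"
proof -
  obtain N where N: "\<forall>k\<ge>N. g k \<ge> 2 \<and> g k \<ge> 0 \<and> \<bar>g (Suc k) - g k\<bar> \<le> 1"
    using good_N[of 0] by blast
  define f6 where "f6 n = \<bar>g (Suc n) - g n\<bar> / (g n)\<^sup>2" for n
  define f7 where "f7 n = \<bar>(g (Suc (Suc n)) - g (Suc n)) - (g (Suc n) - g n)\<bar> / g n" for n
  define G where "G n = 4*(4*f7 n) + (8+12*R+3*R\<^sup>2)*(2*f6 (Suc n)) + (2+2*R)*(4*f6 n) + 2*R*(4*f6 (Suc n))" for n
  have s6: "summable f6" using C6 unfolding f6_def .
  have s6': "summable (\<lambda>n. f6 (Suc n))" using s6 by (simp add: summable_Suc_iff)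
  have s7: "summable f7" using C7 unfolding f7_def .
  have sG: "summable G" unfolding G_def
    by (intro summable_add summable_mult s6 s6' s7)
  show ?thesis
  proof (rule summable_comparison_test'[OF sG])
    fix n assume n: "n \<ge> N"
    define a where "a = g n"
    define b where "b = g (Suc n)"
    define c where "c = g (Suc (Suc n))"
    have a2: "a \<ge> 2" and b2: "b \<ge> 2" and c2: "c \<ge> 2" using N n by (auto simp: a_def b_def c_def)
    have ab: "b \<ge> a/2" "a \<ge> b/2" using ratio[of n] N n by (auto simp: a_def b_def)
    have bc: "c \<ge> b/2" "b \<ge> c/2" using ratio[of "Suc n"] N n by (auto simp: c_def b_def)
    define X where "X = \<bar>(c - b) - (b - a)\<bar>"
    define Y where "Y = \<bar>c - b\<bar>"
    define Z where "Z = \<bar>b - a\<bar>"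
    have X0: "X \<ge> 0" and Y0: "Y \<ge> 0" and Z0: "Z \<ge> 0" by (auto simp: X_def Y_def Z_def)
    have t1: "X/c \<le> 4*(X/a)"
    proof -
      have "X/c \<le> X/(a/4)" using a2 c2 ab bc X0 by (intro divide_left_mono) auto
      thus ?thesis by (simp add: mult.commute)
    qed
    have t2: "Y/(b*c) \<le> 2*(Y/b\<^sup>2)"
    proof -
      have "b*(b/2) \<le> b*c" using b2 bc by (intro mult_left_mono) auto
      hence "Y/(b*c) \<le> Y/(b*(b/2))" using b2 c2 Y0 by (intro divide_left_mono) auto
      thus ?thesis by (simp add: power2_eq_square mult.commute)
    qed
    have t3: "Z/(a*c) \<le> 4*(Z/a\<^sup>2)"
    proof -
      have "a*(a/4) \<le> a*c" using a2 ab bc by (intro mult_left_mono) auto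
      hence "Z/(a*c) \<le> Z/(a*(a/4))" using a2 c2 Z0 by (intro divide_left_mono) auto
      thus ?thesis by (simp add: power2_eq_square mult.commute)
    qed
    have t4: "Y/(a*c) \<le> 4*(Y/b\<^sup>2)"
    proof -
      have "(b/2)*(b/2) \<le> a*c" using b2 ab bc by (intro mult_mono) auto
      hence "Y/(a*c) \<le> Y/((b/2)*(b/2))" using b2 a2 c2 Y0 by (intro divide_left_mono) auto
      thus ?thesis by (simp add: power2_eq_square mult.commute)
    qed
    have f7n: "f7 n = X/a" unfolding f7_def X_def a_def b_def c_def ..
    have f6n: "f6 n = Z/a\<^sup>2" unfolding f6_def Z_def a_def b_def ..
    have f6s: "f6 (Suc n) = Y/b\<^sup>2" unfolding f6_def Y_def c_def b_def ..
    have een: "ee R n = 4*(X/c) + (8+12*R+3*R\<^sup>2)*(Y/(b*c)) + (2+2*R)*(Z/(a*c)) + 2*R*(Y/(a*c))"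
      unfolding ee_def X_def Y_def Z_def a_def b_def c_def by simp
    have "ee R n \<le> G n" unfolding een G_def f7n f6n f6s using R0 t1 t2 t3 t4
      by (intro add_mono mult_left_mono) auto
    then show "norm (ee R n) \<le> G n" using ee_nonneg[OF R0, of n] by simp
  qed
qed

lemma pbound:
  assumes R0: "R \<ge> 0"
  shows "\<exists>B. \<forall>w. \<bar>w\<bar> \<le> R \<longrightarrow> \<bar>opoly g n w\<bar> \<le> B"
proof (induction n rule: less_induct)
  case (less n)
  show ?case
  proof (cases n)
    case 0 then show ?thesis by auto
  next
    case (Suc m)
    show ?thesis
    proof (cases m)
      case 0
      have "\<bar>opoly g n w\<bar> \<le> R / g 0" if "\<bar>w\<bar> \<le> R" for w
        using that pos[of 0] by (simp add: Suc 0 abs_divide divide_right_mono)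
      then show ?thesis by blast
    next
      case (Suc k)
      obtain B1 where B1: "\<And>w. \<bar>w\<bar> \<le> R \<Longrightarrow> \<bar>opoly g (Suc k) w\<bar> \<le> B1"
        using less[of "Suc k"] \<open>n = Suc m\<close> Suc by auto
      obtain B0 where B0: "\<And>w. \<bar>w\<bar> \<le> R \<Longrightarrow> \<bar>opoly g k w\<bar> \<le> B0"
        using less[of k] \<open>n = Suc m\<close> Suc by auto
      have "\<bar>opoly g n w\<bar> \<le> (R*B1 + g k * B0) / g (Suc k)" if w: "\<bar>w\<bar> \<le> R" for w
      proof -
        have "\<bar>w * opoly g (Suc k) w - g k * opoly g k w\<bar> \<le> \<bar>w * opoly g (Suc k) w\<bar> + \<bar>g k * opoly g k w\<bar>"
          by (rule abs_triangle_ineq4)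
        also have "\<bar>w * opoly g (Suc k) w\<bar> \<le> R*B1"
          unfolding abs_mult using w B1[OF w] R0 by (intro mult_mono) auto
        also have "\<bar>g k * opoly g k w\<bar> \<le> g k * B0"
          unfolding abs_mult using B0[OF w] pos[of k] by (simp add: mult_left_mono)
        finally have "\<bar>w * opoly g (Suc k) w - g k * opoly g k w\<bar> \<le> R*B1 + g k * B0" by simp
        then show ?thesis using pos[of "Suc k"]
          by (simp add: \<open>n = Suc m\<close> Suc abs_divide divide_right_mono)
      qed
      then show ?thesis by blast
    qed
  qed
qed

lemma FFbound_fixed:
  assumes R0: "R \<ge> 0"
  shows "\<exists>Q. \<forall>w. \<bar>w\<bar> \<le> R \<longrightarrow> FF g n w \<le> Q"
proof -
  obtain B where B: "\<And>w. \<bar>w\<bar> \<le> R \<Longrightarrow> \<bar>opoly g n w\<bar> \<le> B" using pbound[OF R0, of n] by blast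
  obtain B' where B': "\<And>w. \<bar>w\<bar> \<le> R \<Longrightarrow> \<bar>opoly g (Suc n) w\<bar> \<le> B'" using pbound[OF R0, of "Suc n"] by blast
  have "FF g n w \<le> g n * (B\<^sup>2 + B'\<^sup>2) + R*(B*B')" if w: "\<bar>w\<bar> \<le> R" for w
  proof -
    have s1: "(opoly g n w)\<^sup>2 \<le> B\<^sup>2"
      using B[OF w] by (metis abs_ge_zero power2_abs power_mono)
    have s2: "(opoly g (Suc n) w)\<^sup>2 \<le> B'\<^sup>2"
      using B'[OF w] by (metis abs_ge_zero power2_abs power_mono)
    have "g n * ((opoly g n w)\<^sup>2 + (opoly g (Suc n) w)\<^sup>2) \<le> g n * (B\<^sup>2 + B'\<^sup>2)"
      using s1 s2 pos[of n] by (intro mult_left_mono) auto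
    moreover have "\<bar>w * opoly g n w * opoly g (Suc n) w\<bar> \<le> R*(B*B')"
    proof -
      have "\<bar>w * opoly g n w * opoly g (Suc n) w\<bar> = \<bar>w\<bar> * (\<bar>opoly g n w\<bar> * \<bar>opoly g (Suc n) w\<bar>)"
        by (simp add: abs_mult)
      also have "\<dots> \<le> R*(B*B')"
        using w B[OF w] B'[OF w] R0 by (intro mult_mono) auto
      finally show ?thesis .
    qed
    ultimately show ?thesis unfolding FF_def by linarith
  qed
  then show ?thesis by blast
qed

lemma FF_nonneg:
  assumes "\<bar>w\<bar> \<le> g n"
  shows "FF g n w \<ge> 0"
proof -
  have "0 \<le> g n * ((opoly g n w)\<^sup>2 + (opoly g (Suc n) w)\<^sup>2)" using pos[of n] by simp
  then show ?thesis using FF_lower[OF assms] by linarith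
qed

lemma Fbound:
  assumes R0: "R \<ge> 0" and N: "\<forall>k\<ge>N. g k \<ge> 2 \<and> g k \<ge> R \<and> \<bar>g (Suc k) - g k\<bar> \<le> 1"
  shows "\<exists>M\<ge>0. \<forall>n\<ge>N. \<forall>w. \<bar>w\<bar> \<le> R \<longrightarrow> FF g n w \<le> M"
proof -
  obtain Q0 where Q0: "\<And>w. \<bar>w\<bar> \<le> R \<Longrightarrow> FF g N w \<le> Q0" using FFbound_fixed[OF R0, of N] by blast
  obtain Q1 where Q1: "\<And>w. \<bar>w\<bar> \<le> R \<Longrightarrow> FF g (Suc N) w \<le> Q1" using FFbound_fixed[OF R0, of "Suc N"] by blast
  define M0 where "M0 = max 0 (max Q0 Q1)"
  have M00: "M0 \<ge> 0" unfolding M0_def by simp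
  have e0: "\<And>i. ee R i \<ge> 0" using ee_nonneg[OF R0] .
  have claim: "\<forall>w. \<bar>w\<bar> \<le> R \<longrightarrow> FF g n w \<le> M0 * exp (\<Sum>i\<in>{N..<n}. ee R i)" if "n \<ge> N" for n
    using that
  proof (induction n rule: less_induct)
    case (less n)
    show ?case
    proof (intro allI impI)
      fix w :: real assume w: "\<bar>w\<bar> \<le> R"
      have ex1: "1 \<le> exp (\<Sum>i\<in>{N..<n}. ee R i)"
        using e0 by (simp add: sum_nonneg)
      consider "n = N" | "n = Suc N" | m where "n = Suc (Suc m)" "m \<ge> N"
        using less.prems by (metis Suc_le_D le_Suc_eq le_antisym not_less_eq_eq)
      then show "FF g n w \<le> M0 * exp (\<Sum>i\<in>{N..<n}. ee R i)"
      proof cases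
        case 1
        have "FF g n w \<le> M0" using Q0[OF w] 1 unfolding M0_def by simp
        also have "\<dots> \<le> M0 * exp (\<Sum>i\<in>{N..<n}. ee R i)" using ex1 M00 by (simp add: mult_le_cancel_left1)
        finally show ?thesis .
      next
        case 2
        have "FF g n w \<le> M0" using Q1[OF w] 2 unfolding M0_def by simp
        also have "\<dots> \<le> M0 * exp (\<Sum>i\<in>{N..<n}. ee R i)" using ex1 M00 by (simp add: mult_le_cancel_left1)
        finally show ?thesis .
      next
        case 3
        have wm: "\<bar>w\<bar> \<le> g m" using N 3 w by force
        have Fm0: "FF g m w \<ge> 0" by (rule FF_nonneg[OF wm])
        have IH: "FF g m w \<le> M0 * exp (\<Sum>i\<in>{N..<m}. ee R i)"
          using less.IH[of m] 3 w by auto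
        have "FF g n w \<le> FF g m w + ee R m * FF g m w"
          using step2[OF N 3(2) w] 3(1) by (simp add: abs_le_iff)
        also have "\<dots> = (1 + ee R m) * FF g m w" by (simp add: algebra_simps)
        also have "\<dots> \<le> exp (ee R m) * FF g m w" using Fm0 by (intro mult_right_mono) auto
        also have "\<dots> \<le> exp (ee R m) * (M0 * exp (\<Sum>i\<in>{N..<m}. ee R i))"
          using IH by (intro mult_left_mono) auto
        also have "\<dots> = M0 * exp ((\<Sum>i\<in>{N..<m}. ee R i) + ee R m)"
          by (simp add: exp_add)
        also have "\<dots> \<le> M0 * exp (\<Sum>i\<in>{N..<n}. ee R i)"
        proof -
          have "(\<Sum>i\<in>{N..<n}. ee R i) = (\<Sum>i\<in>{N..<m}. ee R i) + ee R m + ee R (Suc m)"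
            using 3 by simp
          then show ?thesis using M00 e0[of "Suc m"] by (intro mult_left_mono) auto
        qed
        finally show ?thesis .
      qed
    qed
  qed
  define M where "M = M0 * exp (suminf (ee R))"
  have "FF g n w \<le> M" if "n \<ge> N" "\<bar>w\<bar> \<le> R" for n w
  proof -
    have "(\<Sum>i\<in>{N..<n}. ee R i) \<le> suminf (ee R)"
      using ee_summable[OF R0] e0 by (intro sum_le_suminf) auto
    hence "M0 * exp (\<Sum>i\<in>{N..<n}. ee R i) \<le> M" unfolding M_def using M00 by (intro mult_left_mono) auto
    then show ?thesis using claim[OF that(1)] that(2) by force
  qed
  moreover have "M \<ge> 0" unfolding M_def using M00 by simp
  ultimately show ?thesis by blast
qed

lemma wxy_le:
  fixes w x y :: real
  shows "\<bar>w*x*y\<bar> \<le> \<bar>w\<bar>*((x\<^sup>2+y\<^sup>2)/2)"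
proof -
  have "0 \<le> (\<bar>x\<bar> - \<bar>y\<bar>)\<^sup>2" by simp
  also have "(\<bar>x\<bar> - \<bar>y\<bar>)\<^sup>2 = x\<^sup>2 + y\<^sup>2 - 2*\<bar>x*y\<bar>"
    by (simp add: power2_diff abs_mult)
  finally have h: "0 \<le> x\<^sup>2 + y\<^sup>2 - 2*\<bar>x*y\<bar>" .
  define t where "t = \<bar>x*y\<bar>"
  define u where "u = x\<^sup>2 + y\<^sup>2"
  have "0 \<le> u - 2*t" using h unfolding t_def u_def .
  hence tu: "t \<le> u/2" by linarith
  have "\<bar>w*x*y\<bar> = \<bar>w\<bar>*t" unfolding t_def by (simp add: abs_mult)
  also have "\<dots> \<le> \<bar>w\<bar>*(u/2)" using tu by (intro mult_left_mono) auto
  finally show ?thesis unfolding u_def .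
qed

lemma even_steps:
  assumes R0: "R \<ge> 0" and N: "\<forall>k\<ge>N. g k \<ge> 2 \<and> g k \<ge> R \<and> \<bar>g (Suc k) - g k\<bar> \<le> 1"
    and M: "\<forall>n\<ge>N. \<forall>w. \<bar>w\<bar> \<le> R \<longrightarrow> FF g n w \<le> M"
    and n: "n \<ge> N" and w: "\<bar>w\<bar> \<le> R"
  shows "\<bar>FF g (n + 2*j) w - FF g n w\<bar> \<le> M * (\<Sum>i\<in>{n..<n+2*j}. ee R i)"
proof (induction j)
  case 0 then show ?case by simp
next
  case (Suc j)
  define m where "m = n + 2*j"
  have mN: "m \<ge> N" using n unfolding m_def by simp
  have wm: "\<bar>w\<bar> \<le> g m" using N mN w by force
  have e: "ee R m \<ge> 0" "ee R (Suc m) \<ge> 0" using ee_nonneg[OF R0] by auto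
  have "\<bar>FF g (Suc (Suc m)) w - FF g m w\<bar> \<le> ee R m * FF g m w" by (rule step2[OF N mN w])
  also have "\<dots> \<le> ee R m * M" using M mN w e by (intro mult_left_mono) auto
  finally have st: "\<bar>FF g (Suc (Suc m)) w - FF g m w\<bar> \<le> ee R m * M" .
  have sum: "(\<Sum>i\<in>{n..<Suc (Suc m)}. ee R i) = (\<Sum>i\<in>{n..<m}. ee R i) + ee R m + ee R (Suc m)"
    unfolding m_def by simp
  have M0: "M \<ge> 0" using M mN FF_nonneg[OF wm] w by force
  have "\<bar>FF g (n + 2 * Suc j) w - FF g n w\<bar> \<le> \<bar>FF g (Suc (Suc m)) w - FF g m w\<bar> + \<bar>FF g m w - FF g n w\<bar>"
    unfolding m_def by simp
  also have "\<dots> \<le> ee R m * M + M * (\<Sum>i\<in>{n..<m}. ee R i)" using st Suc.IH unfolding m_def by simp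
  also have "\<dots> \<le> M * (\<Sum>i\<in>{n..<n + 2 * Suc j}. ee R i)"
  proof -
    have "n + 2 * Suc j = Suc (Suc m)" unfolding m_def by simp
    then have "M * (\<Sum>i\<in>{n..<n + 2 * Suc j}. ee R i) = M * (\<Sum>i\<in>{n..<m}. ee R i) + M * ee R m + M * ee R (Suc m)"
      using sum by (simp add: algebra_simps)
    moreover have "M * ee R (Suc m) \<ge> 0" using M0 e by simp
    ultimately show ?thesis by (simp add: mult.commute)
  qed
  finally show ?case .
qed

lemma one_step:
  assumes N: "\<forall>k\<ge>N. g k \<ge> 2 \<and> g k \<ge> R \<and> \<bar>g (Suc k) - g k\<bar> \<le> 1"
    and M: "\<forall>n\<ge>N. \<forall>w. \<bar>w\<bar> \<le> R \<longrightarrow> FF g n w \<le> M"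
    and n: "n \<ge> N" and w: "\<bar>w\<bar> \<le> R"
  shows "\<bar>FF g (Suc n) w - FF g n w\<bar> \<le> 4 * M * \<bar>g (Suc n) - g n\<bar>"
proof -
  define a where "a = g n"
  define b where "b = g (Suc n)"
  define F where "F = FF g n w"
  define F' where "F' = FF g (Suc n) w"
  define x where "x = opoly g n w"
  define y where "y = opoly g (Suc n) w"
  have a2: "a \<ge> 2" and b2: "b \<ge> 2" and d: "\<bar>b - a\<bar> \<le> 1" using N n by (auto simp: a_def b_def)
  have wa: "\<bar>w\<bar> \<le> a" using N n w by (force simp: a_def)
  have FM: "F \<le> M" using M n w unfolding F_def by auto
  have low: "a*(x\<^sup>2+y\<^sup>2) \<le> 2*F" using FF_lower[of w n] wa unfolding a_def F_def x_def y_def by simp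
  have F0: "F \<ge> 0" using FF_nonneg[of w n] wa unfolding a_def F_def by simp
  have st: "b*F' = a*F + (b\<^sup>2 - a\<^sup>2)*y\<^sup>2" using FF_step[of g n w, OF pos] unfolding a_def b_def F_def F'_def y_def .
  have eq: "b*(F' - F) = (b-a)*((a+b)*y\<^sup>2 - F)" using st by (simp add: algebra_simps power2_eq_square)
  have ay: "a*y\<^sup>2 \<le> 2*F" using low a2 by (smt (verit) distrib_left mult_nonneg_nonneg zero_le_power2)
  have by2: "b*y\<^sup>2 \<le> 4*F"
  proof -
    have "b \<le> 2*a" using d a2 by (auto simp: abs_le_iff)
    hence "b*y\<^sup>2 \<le> (2*a)*y\<^sup>2" by (intro mult_right_mono) auto
    thus ?thesis using ay by simp
  qed
  have "b*\<bar>F' - F\<bar> = \<bar>b-a\<bar>*\<bar>(a+b)*y\<^sup>2 - F\<bar>" using eq b2 by (metis abs_mult abs_of_pos less_le_trans zero_less_numeral)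
  also have "\<dots> \<le> \<bar>b-a\<bar>*(7*F)"
  proof (rule mult_left_mono)
    have "0 \<le> a*y\<^sup>2" "0 \<le> b*y\<^sup>2" using a2 b2 by auto
    then show "\<bar>(a+b)*y\<^sup>2 - F\<bar> \<le> 7*F" using ay by2 F0 by (simp add: abs_le_iff distrib_right)
  qed simp
  also have "\<dots> \<le> \<bar>b-a\<bar>*(7*M)" using FM by (intro mult_left_mono) auto
  finally have bb: "b*\<bar>F' - F\<bar> \<le> \<bar>b-a\<bar>*(7*M)" .
  have M0: "M \<ge> 0" using FM F0 by simp
  have "2*\<bar>F' - F\<bar> \<le> b*\<bar>F' - F\<bar>" using b2 by (intro mult_right_mono) auto
  hence "2*\<bar>F' - F\<bar> \<le> \<bar>b-a\<bar>*(7*M)" using bb by linarith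
  moreover have "\<bar>b-a\<bar>*(7*M) \<le> \<bar>b-a\<bar>*(8*M)" using M0 by (intro mult_left_mono) auto
  moreover have "\<bar>b-a\<bar>*(8*M) = 2*(\<bar>b-a\<bar>*(4*M))" by simp
  ultimately have "2*\<bar>F' - F\<bar> \<le> 2*(\<bar>b-a\<bar>*(4*M))" by (metis order_trans)
  hence "\<bar>F' - F\<bar> \<le> \<bar>b-a\<bar>*(4*M)" by (simp only: mult_le_cancel_left_pos zero_less_numeral)
  then show ?thesis unfolding F_def F'_def a_def b_def by (simp add: mult.commute mult.left_commute)
qed


definition hh :: "nat \<Rightarrow> real \<Rightarrow> real" where
  "hh n w = (1/2) * (g n * ((opoly g n w)\<^sup>2 + (opoly g (Suc n) w)\<^sup>2))"

lemma hh_FF: "hh n w = (FF g n w + w * opoly g n w * opoly g (Suc n) w) / 2"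
  unfolding hh_def FF_def by (simp add: field_simps)

lemma basic_bounds:
  assumes N: "\<forall>k\<ge>N. g k \<ge> 2 \<and> g k \<ge> R \<and> \<bar>g (Suc k) - g k\<bar> \<le> 1"
    and M: "\<forall>n\<ge>N. \<forall>w. \<bar>w\<bar> \<le> R \<longrightarrow> FF g n w \<le> M"
    and k: "k \<ge> N" and w: "\<bar>w\<bar> \<le> R"
  shows "\<bar>w * opoly g k w * opoly g (Suc k) w\<bar> \<le> R * (M / g k)"
    and "0 \<le> hh k w" and "hh k w \<le> M" and "(opoly g (Suc k) w)\<^sup>2 \<le> M"
proof -
  define x where "x = opoly g k w"
  define y where "y = opoly g (Suc k) w"
  have wk: "\<bar>w\<bar> \<le> g k" using N k w by force
  have g2: "g k \<ge> 2" using N k by auto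
  have low: "g k * (x\<^sup>2 + y\<^sup>2) \<le> 2 * FF g k w" using FF_lower[OF wk] unfolding x_def y_def .
  have FM: "FF g k w \<le> M" using M k w by auto
  have s: "(x\<^sup>2+y\<^sup>2)/2 \<le> M / g k" using low FM g2 by (simp add: field_simps)
  have "\<bar>w*x*y\<bar> \<le> \<bar>w\<bar>*((x\<^sup>2+y\<^sup>2)/2)" by (rule wxy_le)
  also have "\<dots> \<le> R * (M / g k)" using w s by (intro mult_mono) auto
  finally show "\<bar>w * opoly g k w * opoly g (Suc k) w\<bar> \<le> R * (M / g k)" unfolding x_def y_def .
  show "0 \<le> hh k w" unfolding hh_def using pos[of k] by simp
  show "hh k w \<le> M" unfolding hh_def using low FM unfolding x_def y_def by simp
  have "y\<^sup>2 \<le> x\<^sup>2 + y\<^sup>2" by simp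
  also have "x\<^sup>2 + y\<^sup>2 \<le> g k * (x\<^sup>2 + y\<^sup>2) / 2"
  proof -
    have "2*(x\<^sup>2 + y\<^sup>2) \<le> g k * (x\<^sup>2 + y\<^sup>2)" using g2 by (intro mult_right_mono) auto
    thus ?thesis by (simp add: field_simps)
  qed
  also have "\<dots> \<le> M" using low FM by simp
  finally show "(opoly g (Suc k) w)\<^sup>2 \<le> M" unfolding y_def .
qed

lemma hcauchy:
  assumes R0: "R \<ge> 0"
  shows "\<exists>N M. M \<ge> 0 \<and> (\<forall>k\<ge>N. \<forall>w. \<bar>w\<bar> \<le> R \<longrightarrow> 0 \<le> hh k w \<and> hh k w \<le> M \<and> (opoly g (Suc k) w)\<^sup>2 \<le> M \<and> g k \<ge> 2)
     \<and> uniformly_Cauchy_on {w. \<bar>w\<bar> \<le> R} hh"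
proof -
  obtain N where N: "\<forall>k\<ge>N. g k \<ge> 2 \<and> g k \<ge> R \<and> \<bar>g (Suc k) - g k\<bar> \<le> 1" using good_N[of R] by blast
  obtain M where M0: "M \<ge> 0" and M: "\<forall>n\<ge>N. \<forall>w. \<bar>w\<bar> \<le> R \<longrightarrow> FF g n w \<le> M"
    using Fbound[OF R0 N] by blast
  have e0: "\<And>i. ee R i \<ge> 0" using ee_nonneg[OF R0] .
  have UC: "uniformly_Cauchy_on {w. \<bar>w\<bar> \<le> R} hh"
  proof (rule uniformly_Cauchy_onI')
    fix e :: real assume e: "e > 0"
    have eM: "e/(4*(M+1)) > 0" using e M0 by simp
    obtain N1 where N1: "\<forall>m\<ge>N1. \<forall>k. norm (sum (ee R) {m..<k}) < e/(4*(M+1))"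
      using ee_summable[OF R0] eM unfolding summable_Cauchy by blast
    have ev1: "eventually (\<lambda>k. \<bar>g (Suc k) - g k\<bar> < e/(16*(M+1))) sequentially"
      using C2 e M0 unfolding tendsto_iff by (auto simp: dist_real_def elim!: allE[of _ "e/(16*(M+1))"])
    have ev2: "eventually (\<lambda>k. 4*(R*M+1)/e \<le> g k) sequentially"
      using C1 unfolding filterlim_at_top by blast
    obtain N2 where N2: "\<forall>k\<ge>N2. \<bar>g (Suc k) - g k\<bar> < e/(16*(M+1)) \<and> 4*(R*M+1)/e \<le> g k"
      using eventually_conj[OF ev1 ev2] unfolding eventually_sequentially by blast
    define K where "K = max N (max N1 N2)"
    have tail: "M * (\<Sum>i\<in>{a..<b}. ee R i) \<le> e/4" if "a \<ge> K" for a b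
    proof -
      have "(\<Sum>i\<in>{a..<b}. ee R i) < e/(4*(M+1))"
        using N1 that e0 unfolding K_def by (metis (no_types, lifting) abs_of_nonneg max.boundedE real_norm_def sum_nonneg)
      hence "M * (\<Sum>i\<in>{a..<b}. ee R i) \<le> M * (e/(4*(M+1)))" using M0 by (intro mult_left_mono) auto
      also have "\<dots> \<le> e/4" using M0 e by (simp add: field_simps)
      finally show ?thesis .
    qed
    have gbig: "R * (M / g k) < e/4" if "k \<ge> K" for k
    proof -
      have gk: "4*(R*M+1)/e \<le> g k" using N2 that unfolding K_def by auto
      have gp: "g k > 0" by (rule pos)
      have "4*(R*M+1) \<le> g k * e" using gk e by (simp add: field_simps)
      hence "4*(R*M) < g k * e" by simp
      thus ?thesis using gp by (simp add: field_simps)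
    qed
    show "\<exists>K. \<forall>w\<in>{w. \<bar>w\<bar> \<le> R}. \<forall>m\<ge>K. \<forall>n>m. dist (hh m w) (hh n w) < e"
    proof (intro exI ballI allI impI)
      fix w m n assume w': "w \<in> {w. \<bar>w\<bar> \<le> R}" and m: "m \<ge> K" and mn: "n > m"
      have w: "\<bar>w\<bar> \<le> R" using w' by simp
      have mN: "m \<ge> N" and nN: "n \<ge> N" using m mn unfolding K_def by auto
      have FF: "\<bar>FF g n w - FF g m w\<bar> < e/2"
      proof (cases "even (n - m)")
        case True
        then obtain j where j: "n = m + 2*j" using mn by (metis dvd_def le_add_diff_inverse less_imp_le_nat)
        have "\<bar>FF g n w - FF g m w\<bar> \<le> M * (\<Sum>i\<in>{m..<n}. ee R i)"
          using even_steps[OF R0 N M mN w, of j] j by simp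
        also have "\<dots> \<le> e/4" by (rule tail[OF m])
        finally show ?thesis using e by simp
      next
        case False
        then obtain j where j: "n = Suc m + 2*j" using mn
          by (metis Suc_diff_Suc Suc_leI add_diff_inverse_nat dvd_def even_Suc le_add_diff_inverse not_less_iff_gr_or_eq odd_two_times_div_two_succ)
        have "\<bar>FF g n w - FF g (Suc m) w\<bar> \<le> M * (\<Sum>i\<in>{Suc m..<n}. ee R i)"
          using even_steps[OF R0 N M _ w, of "Suc m" j] j mN by simp
        also have "\<dots> \<le> e/4" using m by (intro tail) auto
        finally have a1: "\<bar>FF g n w - FF g (Suc m) w\<bar> \<le> e/4" .
        have "\<bar>FF g (Suc m) w - FF g m w\<bar> \<le> 4 * M * \<bar>g (Suc m) - g m\<bar>" by (rule one_step[OF N M mN w])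
        also have "\<dots> \<le> 4 * M * (e/(16*(M+1)))"
          using N2 m M0 unfolding K_def by (intro mult_left_mono) auto
        also have "\<dots> < e/4" using M0 e by (simp add: field_simps)
        finally have a2: "\<bar>FF g (Suc m) w - FF g m w\<bar> < e/4" .
        show ?thesis using a1 a2 by linarith
      qed
      have bm: "\<bar>w * opoly g m w * opoly g (Suc m) w\<bar> < e/4"
        using basic_bounds(1)[OF N M mN w] gbig[OF m] by linarith
      have bn: "\<bar>w * opoly g n w * opoly g (Suc n) w\<bar> < e/4"
      proof -
        have nK: "n \<ge> K" using m mn by simp
        show ?thesis using basic_bounds(1)[OF N M nN w] gbig[OF nK] by linarith
      qed
      have "dist (hh m w) (hh n w) = \<bar>(FF g m w - FF g n w) + (w * opoly g m w * opoly g (Suc m) w - w * opoly g n w * opoly g (Suc n) w)\<bar> / 2"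
      proof -
        have heq: "hh m w - hh n w = ((FF g m w - FF g n w) + (w * opoly g m w * opoly g (Suc m) w - w * opoly g n w * opoly g (Suc n) w)) / 2"
          unfolding hh_FF by (simp add: field_simps)
        show ?thesis unfolding dist_real_def heq abs_divide by simp
      qed
      also have "\<dots> < e"
      proof -
        define A where "A = FF g m w - FF g n w"
        define B where "B = w * opoly g m w * opoly g (Suc m) w"
        define C where "C = w * opoly g n w * opoly g (Suc n) w"
        have "\<bar>A + (B - C)\<bar> \<le> \<bar>A\<bar> + \<bar>B\<bar> + \<bar>C\<bar>"
          using abs_triangle_ineq[of A "B - C"] abs_triangle_ineq4[of B C] by linarith
        moreover have "\<bar>A\<bar> < e/2" using FF unfolding A_def by (simp add: abs_minus_commute)
        moreover have "\<bar>B\<bar> < e/4" using bm unfolding B_def .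
        moreover have "\<bar>C\<bar> < e/4" using bn unfolding C_def .
        ultimately have "\<bar>A + (B - C)\<bar> < e" by linarith
        then show ?thesis unfolding A_def B_def C_def using e by simp
      qed
      finally show "dist (hh m w) (hh n w) < e" .
    qed
  qed
  have "\<forall>k\<ge>N. \<forall>w. \<bar>w\<bar> \<le> R \<longrightarrow> 0 \<le> hh k w \<and> hh k w \<le> M \<and> (opoly g (Suc k) w)\<^sup>2 \<le> M \<and> g k \<ge> 2"
    using basic_bounds[OF N M] N by blast
  then show ?thesis using M0 UC by blast
qed

lemma hlim:
  assumes R0: "R \<ge> 0"
  shows "uniform_limit {w. \<bar>w\<bar> \<le> R} hh (\<lambda>w. lim (\<lambda>n. hh n w)) sequentially"
proof -
  have UC: "uniformly_Cauchy_on {w. \<bar>w\<bar> \<le> R} hh" using hcauchy[OF R0] by blast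
  obtain l where l: "uniform_limit {w. \<bar>w\<bar> \<le> R} hh l sequentially"
    using Cauchy_uniformly_convergent[OF UC] unfolding uniformly_convergent_on_def by blast
  have "l w = lim (\<lambda>n. hh n w)" if "w \<in> {w. \<bar>w\<bar> \<le> R}" for w
    using tendsto_uniform_limitI[OF l that] by (simp add: limI)
  then show ?thesis using l by (subst uniform_limit_cong'[where g=hh and i=l]) auto
qed

lemma sum_identity:
  "(\<Sum>k\<le>n. (opoly g k w)\<^sup>2) = (\<Sum>k\<le>n. hh k w / g k) + (1 - (opoly g (Suc n) w)\<^sup>2)/2"
proof (induction n)
  case 0
  show ?case unfolding hh_def using pos[of 0] by (simp add: field_simps)
next
  case (Suc n)
  have "hh (Suc n) w / g (Suc n) = ((opoly g (Suc n) w)\<^sup>2 + (opoly g (Suc (Suc n)) w)\<^sup>2)/2"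
    unfolding hh_def using pos[of "Suc n"] by (simp add: field_simps)
  then show ?case using Suc by (simp add: field_simps)
qed

lemma T_unbounded: "\<exists>n0. \<forall>n\<ge>n0. Q < (\<Sum>k\<le>n. 1 / g k)"
proof -
  have nn: "\<And>k. 0 \<le> 1 / g k" using pos by (simp add: less_imp_le)
  have "\<exists>n0. Q < (\<Sum>k\<le>n0. 1 / g k)"
  proof (rule ccontr)
    assume "\<not> ?thesis"
    hence b: "\<And>n. (\<Sum>k\<le>n. 1 / g k) \<le> Q" by (simp add: not_less)
    have "summable (\<lambda>j. 1 / g j)"
    proof (rule summableI_nonneg_bounded[OF nn])
      fix n
      have "(\<Sum>i<n. 1 / g i) \<le> (\<Sum>i\<le>n. 1 / g i)" using nn by (intro sum_mono2) auto
      then show "(\<Sum>i<n. 1 / g i) \<le> Q" using b[of n] by linarith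
    qed
    then show False using C4 by contradiction
  qed
  then obtain n0 where n0: "Q < (\<Sum>k\<le>n0. 1 / g k)" by blast
  have "Q < (\<Sum>k\<le>n. 1 / g k)" if "n \<ge> n0" for n
  proof -
    have "(\<Sum>k\<le>n0. 1 / g k) \<le> (\<Sum>k\<le>n. 1 / g k)" using nn that by (intro sum_mono2) auto
    then show ?thesis using n0 by linarith
  qed
  then show ?thesis by blast
qed

lemma hh_fixed_bound:
  assumes R0: "R \<ge> 0"
  shows "\<exists>B. \<forall>w. \<bar>w\<bar> \<le> R \<longrightarrow> \<bar>hh k w\<bar> \<le> B"
proof -
  obtain B where B: "\<And>w. \<bar>w\<bar> \<le> R \<Longrightarrow> \<bar>opoly g k w\<bar> \<le> B" using pbound[OF R0, of k] by blast
  obtain B' where B': "\<And>w. \<bar>w\<bar> \<le> R \<Longrightarrow> \<bar>opoly g (Suc k) w\<bar> \<le> B'" using pbound[OF R0, of "Suc k"] by blast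
  have "\<bar>hh k w\<bar> \<le> (1/2) * (g k * (B\<^sup>2 + B'\<^sup>2))" if w: "\<bar>w\<bar> \<le> R" for w
  proof -
    have s1: "(opoly g k w)\<^sup>2 \<le> B\<^sup>2"
      using B[OF w] by (metis abs_ge_zero power2_abs power_mono)
    have s2: "(opoly g (Suc k) w)\<^sup>2 \<le> B'\<^sup>2"
      using B'[OF w] by (metis abs_ge_zero power2_abs power_mono)
    have "g k * ((opoly g k w)\<^sup>2 + (opoly g (Suc k) w)\<^sup>2) \<le> g k * (B\<^sup>2 + B'\<^sup>2)"
      using s1 s2 pos[of k] by (intro mult_left_mono) auto
    moreover have "hh k w \<ge> 0" unfolding hh_def using pos[of k] by simp
    ultimately show ?thesis unfolding hh_def by simp
  qed
  then show ?thesis by blast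
qed

lemma finsum_bound:
  assumes R0: "R \<ge> 0"
  shows "\<exists>C. \<forall>w. \<bar>w\<bar> \<le> R \<longrightarrow> (\<Sum>k<K. (\<bar>hh k w\<bar> + M) / g k) \<le> C"
proof (induction K)
  case 0 then show ?case by auto
next
  case (Suc K)
  obtain C where C: "\<And>w. \<bar>w\<bar> \<le> R \<Longrightarrow> (\<Sum>k<K. (\<bar>hh k w\<bar> + M) / g k) \<le> C" using Suc by blast
  obtain B where B: "\<And>w. \<bar>w\<bar> \<le> R \<Longrightarrow> \<bar>hh K w\<bar> \<le> B" using hh_fixed_bound[OF R0, of K] by blast
  have "(\<Sum>k<Suc K. (\<bar>hh k w\<bar> + M) / g k) \<le> C + (B + M) / g K" if w: "\<bar>w\<bar> \<le> R" for w
  proof -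
    have "(\<bar>hh K w\<bar> + M) / g K \<le> (B + M) / g K" using B[OF w] pos[of K] by (intro divide_right_mono) auto
    then show ?thesis using C[OF w] by simp
  qed
  then show ?case by blast
qed

lemma ratio_lim:
  assumes R0: "R \<ge> 0"
  shows "uniform_limit {w. \<bar>w\<bar> \<le> R} (\<lambda>n w. (\<Sum>k\<le>n. (opoly g k w)\<^sup>2) / (\<Sum>k\<le>n. 1 / g k))
           (\<lambda>w. lim (\<lambda>n. hh n w)) sequentially"
proof -
  define L where "L w = lim (\<lambda>n. hh n w)" for w
  obtain N0 M where M0: "M \<ge> 0"
    and bnd: "\<forall>k\<ge>N0. \<forall>w. \<bar>w\<bar> \<le> R \<longrightarrow> 0 \<le> hh k w \<and> hh k w \<le> M \<and> (opoly g (Suc k) w)\<^sup>2 \<le> M \<and> g k \<ge> 2"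
    using hcauchy[OF R0] by blast
  have HL: "uniform_limit {w. \<bar>w\<bar> \<le> R} hh L sequentially" using hlim[OF R0] unfolding L_def .
  have Lb: "0 \<le> L w \<and> L w \<le> M" if w: "\<bar>w\<bar> \<le> R" for w
  proof -
    have t: "(\<lambda>n. hh n w) \<longlonglongrightarrow> L w" using tendsto_uniform_limitI[OF HL] w by simp
    have "0 \<le> L w" using t by (rule LIMSEQ_le_const) (use bnd w in blast)
    moreover have "L w \<le> M" using t by (rule LIMSEQ_le_const2) (use bnd w in blast)
    ultimately show ?thesis by simp
  qed
  show ?thesis unfolding L_def[symmetric] uniform_limit_sequentially_iff
  proof (intro allI impI)
    fix e :: real assume e: "e > 0"
    obtain N1 where N1: "\<forall>n\<ge>N1. \<forall>w\<in>{w. \<bar>w\<bar> \<le> R}. dist (hh n w) (L w) < e/2"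
      using HL e unfolding uniform_limit_sequentially_iff by (meson half_gt_zero)
    define K where "K = max N0 N1"
    obtain C0 where C0: "\<And>w. \<bar>w\<bar> \<le> R \<Longrightarrow> (\<Sum>k<K. (\<bar>hh k w\<bar> + M) / g k) \<le> C0"
      using finsum_bound[OF R0, where K=K and M=M] by blast
    define Q where "Q = 2*(\<bar>C0\<bar> + (1+M)/2)/e"
    have Q0: "Q \<ge> 0" unfolding Q_def using e M0 by simp
    obtain n0 where n0: "\<forall>n\<ge>n0. Q < (\<Sum>k\<le>n. 1 / g k)" using T_unbounded by blast
    show "\<exists>N. \<forall>n\<ge>N. \<forall>w\<in>{w. \<bar>w\<bar> \<le> R}. dist ((\<Sum>k\<le>n. (opoly g k w)\<^sup>2) / (\<Sum>k\<le>n. 1 / g k)) (L w) < e"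
    proof (intro exI allI impI ballI)
      fix n w assume n: "max K n0 \<le> n" and w': "w \<in> {w. \<bar>w\<bar> \<le> R}"
      have w: "\<bar>w\<bar> \<le> R" using w' by simp
      define T where "T = (\<Sum>k\<le>n. 1 / g k)"
      have TQ: "Q < T" using n0 n unfolding T_def by auto
      have T0: "T > 0" using TQ Q0 by linarith
      define y2 where "y2 = (opoly g (Suc n) w)\<^sup>2"
      have y2M: "y2 \<le> M" and y20: "y2 \<ge> 0" using bnd n w unfolding y2_def K_def by auto
      define D where "D = (\<Sum>k\<le>n. (hh k w - L w) / g k)"
      have LT: "(\<Sum>k\<le>n. L w / g k) = L w * T" unfolding T_def by (simp add: sum_distrib_left)
      have Seq: "(\<Sum>k\<le>n. (opoly g k w)\<^sup>2) = D + L w * T + (1 - y2)/2"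
        unfolding sum_identity D_def y2_def LT[symmetric] by (simp add: diff_divide_distrib sum_subtractf)
      have split: "{..n} = {..<K} \<union> {K..n}" using n by auto
      have Dabs: "\<bar>D\<bar> \<le> (\<Sum>k\<le>n. \<bar>hh k w - L w\<bar> / g k)"
        unfolding D_def using pos by (simp add: order_trans[OF sum_abs] abs_divide less_imp_le)
      also have "\<dots> = (\<Sum>k<K. \<bar>hh k w - L w\<bar> / g k) + (\<Sum>k=K..n. \<bar>hh k w - L w\<bar> / g k)"
        unfolding split by (rule sum.union_disjoint) auto
      also have "(\<Sum>k<K. \<bar>hh k w - L w\<bar> / g k) \<le> C0"
      proof -
        have "(\<Sum>k<K. \<bar>hh k w - L w\<bar> / g k) \<le> (\<Sum>k<K. (\<bar>hh k w\<bar> + M) / g k)"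
        proof (rule sum_mono)
          fix k assume "k \<in> {..<K}"
          have "\<bar>hh k w - L w\<bar> \<le> \<bar>hh k w\<bar> + M" using Lb[OF w] by linarith
          then show "\<bar>hh k w - L w\<bar> / g k \<le> (\<bar>hh k w\<bar> + M) / g k" using pos[of k] by (intro divide_right_mono) auto
        qed
        then show ?thesis using C0[OF w] by linarith
      qed
      also have "(\<Sum>k=K..n. \<bar>hh k w - L w\<bar> / g k) \<le> (\<Sum>k=K..n. (e/2) / g k)"
      proof (rule sum_mono)
        fix k assume "k \<in> {K..n}"
        hence "k \<ge> N1" unfolding K_def by auto
        hence "\<bar>hh k w - L w\<bar> \<le> e/2" using N1 w' by (auto simp: dist_real_def less_imp_le)
        then show "\<bar>hh k w - L w\<bar> / g k \<le> (e/2) / g k" using pos[of k] by (intro divide_right_mono) auto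
      qed
      also have "(\<Sum>k=K..n. (e/2) / g k) \<le> (e/2) * T"
      proof -
        have "(\<Sum>k=K..n. (e/2) / g k) = (e/2) * (\<Sum>k=K..n. 1 / g k)" by (simp add: sum_distrib_left)
        also have "(\<Sum>k=K..n. 1 / g k) \<le> T" unfolding T_def using pos by (intro sum_mono2) (auto simp: less_imp_le)
        hence "(e/2) * (\<Sum>k=K..n. 1 / g k) \<le> (e/2) * T" using e by (intro mult_left_mono) auto
        finally show ?thesis .
      qed
      finally have Db: "\<bar>D\<bar> \<le> C0 + (e/2) * T" by simp
      have y2b: "\<bar>(1 - y2)/2\<bar> \<le> (1+M)/2" using y2M y20 M0 by (simp add: abs_le_iff)
      have "(\<Sum>k\<le>n. (opoly g k w)\<^sup>2) / T - L w = (D + (1 - y2)/2) / T"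
        unfolding Seq using T0 by (simp add: field_simps)
      hence "dist ((\<Sum>k\<le>n. (opoly g k w)\<^sup>2) / T) (L w) = \<bar>D + (1 - y2)/2\<bar> / T"
        unfolding dist_real_def using T0 by (simp add: abs_divide)
      also have "\<dots> \<le> (C0 + (e/2) * T + (1+M)/2) / T"
      proof (rule divide_right_mono)
        show "\<bar>D + (1 - y2)/2\<bar> \<le> C0 + (e/2) * T + (1+M)/2"
          using abs_triangle_ineq[of D "(1 - y2)/2"] add_mono[OF Db y2b] by (rule order_trans)
      qed (use T0 in simp)
      also have "\<dots> = (C0 + (1+M)/2) / T + e/2" using T0 by (simp add: field_simps)
      also have "\<dots> < e"
      proof -
        have "(C0 + (1+M)/2) \<le> \<bar>C0\<bar> + (1+M)/2" by simp
        also have "\<dots> = Q * e / 2" unfolding Q_def using e by (simp add: field_simps)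
        also have "\<dots> < T * e / 2" using TQ e by simp
        finally have "(C0 + (1+M)/2) < T * (e/2)" by simp
        hence "(C0 + (1+M)/2) / T < e/2" using T0 by (simp add: divide_less_eq mult.commute)
        then show ?thesis by linarith
      qed
      finally show "dist ((\<Sum>k\<le>n. (opoly g k w)\<^sup>2) / (\<Sum>k\<le>n. 1 / g k)) (L w) < e" unfolding T_def .
    qed
  qed
qed

end


theorem corollary3:
  fixes \<gamma> :: "nat \<Rightarrow> real"
  assumes pos: "\<And>n. \<gamma> n > 0"
    and C1: "filterlim \<gamma> at_top sequentially"
    and C2: "(\<lambda>n. \<gamma> (Suc n) - \<gamma> n) \<longlonglongrightarrow> 0"
    and C3: "\<exists>n0 m0. \<forall>n\<ge>n0. \<forall>m\<ge>m0. \<gamma> (n + m) > \<gamma> n"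
    and C4: "\<not> summable (\<lambda>j. 1 / \<gamma> j)"
    and C5: "\<exists>\<kappa>>1. summable (\<lambda>j. \<gamma> j powr (-\<kappa>))"
    and C6: "summable (\<lambda>n. \<bar>\<gamma> (Suc n) - \<gamma> n\<bar> / (\<gamma> n)\<^sup>2)"
    and C7: "summable (\<lambda>n. \<bar>(\<gamma> (Suc (Suc n)) - \<gamma> (Suc n)) - (\<gamma> (Suc n) - \<gamma> n)\<bar> / \<gamma> n)"
  shows "\<exists>L :: real \<Rightarrow> real. \<forall>K. compact K \<longrightarrow>
           uniform_limit K
             (\<lambda>n w. (\<Sum>k\<le>n. (opoly \<gamma> k w)\<^sup>2) / (\<Sum>k\<le>n. 1 / \<gamma> k)) L sequentially \<and>
           uniform_limit K
             (\<lambda>n w. (1/2) * (\<gamma> n * ((opoly \<gamma> n w)\<^sup>2 + (opoly \<gamma> (Suc n) w)\<^sup>2))) L sequentially"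
proof -
  define L where "L w = lim (\<lambda>n. hh \<gamma> n w)" for w
  have hheq: "(\<lambda>n w. (1/2) * (\<gamma> n * ((opoly \<gamma> n w)\<^sup>2 + (opoly \<gamma> (Suc n) w)\<^sup>2))) = hh \<gamma>"
    by (intro ext) (simp add: hh_def[OF pos C1 C2 C4 C6 C7])
  show ?thesis
  proof (rule exI[of _ L], intro allI impI)
    fix K :: "real set" assume "compact K"
    then obtain R where R: "\<forall>x\<in>K. norm x \<le> R" using compact_imp_bounded bounded_iff by blast
    define R' where "R' = max R 0"
    have R0: "R' \<ge> 0" unfolding R'_def by simp
    have sub: "K \<subseteq> {w. \<bar>w\<bar> \<le> R'}" using R unfolding R'_def by force
    have u1: "uniform_limit {w. \<bar>w\<bar> \<le> R'} (\<lambda>n w. (\<Sum>k\<le>n. (opoly \<gamma> k w)\<^sup>2) / (\<Sum>k\<le>n. 1 / \<gamma> k)) L sequentially"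
      using ratio_lim[OF pos C1 C2 C4 C6 C7 R0] unfolding L_def .
    have u2: "uniform_limit {w. \<bar>w\<bar> \<le> R'} (hh \<gamma>) L sequentially"
      using hlim[OF pos C1 C2 C4 C6 C7 R0] unfolding L_def .
    show "uniform_limit K (\<lambda>n w. (\<Sum>k\<le>n. (opoly \<gamma> k w)\<^sup>2) / (\<Sum>k\<le>n. 1 / \<gamma> k)) L sequentially \<and>
           uniform_limit K (\<lambda>n w. (1/2) * (\<gamma> n * ((opoly \<gamma> n w)\<^sup>2 + (opoly \<gamma> (Suc n) w)\<^sup>2))) L sequentially"
      unfolding hheq using uniform_limit_on_subset[OF u1 sub] uniform_limit_on_subset[OF u2 sub] by blast
  qed
qed

end
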